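(* Let $p$ be a prime and let $\Gamma = \bigoplus_{i \in B_1} \mathbb{Q} \oplus \bigoplus_{i \in B_2} \mathcal{C}(p^\infty)$ for index sets $B_1, B_2$, regarded as a discrete abelian group. If $E \subset \Gamma$ is $p$-PR, then $|E| \le |B_1| + |B_2|$.
   Context: $\mathcal{C}(p^\infty)$ denotes the group of all $p^m$-th roots of unity, $m \ge 1$. For a discrete abelian group $\Delta$ with compact dual $\widehat{\Delta}$ and $N \in \mathbb{N}$, a subset $E \subset \Delta$ is $N$-PR if for every function $\varphi: E \to \mathbb{Z}_N$ (the $N$-th roots of unity in the unit circle) there exists $x \in \widehat{\Delta}$ with $\varphi(\gamma) = \gamma(x)$ for all $\gamma \in E$. *)

theory Defs
  imports Complex_Main "HOL-Library.Equipollence" "HOL-Computational_Algebra.Primes"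
begin

definition prufer :: "nat \<Rightarrow> complex set" where
  "prufer p = {z. \<exists>m\<ge>1. z ^ (p ^ m) = 1}"

definition roots_unity :: "nat \<Rightarrow> complex set" where
  "roots_unity N = {z. z ^ N = 1}"

text \<open>Elements are pairs (f, g) of finitely supported families; the Q-part is written
  additively, the C(p^infinity)-part multiplicatively (identity 1).\<close>
definition Gamma :: "nat \<Rightarrow> 'a set \<Rightarrow> 'b set \<Rightarrow> (('a \<Rightarrow> rat) \<times> ('b \<Rightarrow> complex)) set" where
  "Gamma p B1 B2 = {(f, g).
     finite {i. f i \<noteq> 0} \<and> {i. f i \<noteq> 0} \<subseteq> B1 \<and>
     finite {j. g j \<noteq> 1} \<and> {j. g j \<noteq> 1} \<subseteq> B2 \<and>
     (\<forall>j. g j \<in> prufer p)}"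

definition gamma_op :: "(('a \<Rightarrow> rat) \<times> ('b \<Rightarrow> complex)) \<Rightarrow> (('a \<Rightarrow> rat) \<times> ('b \<Rightarrow> complex))
    \<Rightarrow> (('a \<Rightarrow> rat) \<times> ('b \<Rightarrow> complex))" where
  "gamma_op x y = ((\<lambda>i. fst x i + fst y i), (\<lambda>j. snd x j * snd y j))"

text \<open>Elements of the dual group: characters of the discrete group Gamma, i.e. homomorphisms
  Gamma -> unit circle (every homomorphism is continuous since Gamma is discrete).
  The pairing gamma(x) of gamma in Gamma with x in the dual is chi gamma.\<close>
definition is_character :: "nat \<Rightarrow> 'a set \<Rightarrow> 'b set \<Rightarrow> ((('a \<Rightarrow> rat) \<times> ('b \<Rightarrow> complex)) \<Rightarrow> complex) \<Rightarrow> bool" where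
  "is_character p B1 B2 \<chi> \<longleftrightarrow>
     (\<forall>x\<in>Gamma p B1 B2. cmod (\<chi> x) = 1) \<and>
     (\<forall>x\<in>Gamma p B1 B2. \<forall>y\<in>Gamma p B1 B2. \<chi> (gamma_op x y) = \<chi> x * \<chi> y)"

definition N_PR :: "nat \<Rightarrow> nat \<Rightarrow> 'a set \<Rightarrow> 'b set \<Rightarrow> (('a \<Rightarrow> rat) \<times> ('b \<Rightarrow> complex)) set \<Rightarrow> bool" where
  "N_PR N p B1 B2 E \<longleftrightarrow>
     (\<forall>\<phi>. (\<forall>\<gamma>\<in>E. \<phi> \<gamma> \<in> roots_unity N) \<longrightarrow>
        (\<exists>\<chi>. is_character p B1 B2 \<chi> \<and> (\<forall>\<gamma>\<in>E. \<chi> \<gamma> = \<phi> \<gamma>)))"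

end

theory Submission imports Defs "HOL-Analysis.Complex_Transcendental" "HOL-Algebra.Free_Abelian_Groups"
begin

lemma relation_exists:
  fixes p :: nat and M :: "'c \<Rightarrow> int" and x :: "'i \<Rightarrow> 'c \<Rightarrow> int"
  assumes pr: "prime p" and fC: "finite C"
  shows "\<And>I x. finite I \<Longrightarrow> card C < card I \<Longrightarrow> (\<forall>c\<in>C. M c = 0 \<or> (\<exists>N. M c = int p ^ N)) \<Longrightarrow>
    \<exists>w. (\<forall>c\<in>C. M c dvd (\<Sum>i\<in>I. w i * x i c)) \<and> (\<exists>i\<in>I. \<not> int p dvd w i)"
  using fC
proof (induction C rule: finite_induct)
  case empty
  then obtain i0 where "i0 \<in> I" by fastforce
  then show ?case by (intro exI[of _ "\<lambda>i. if i = i0 then 1 else 0"]) (use prime_gt_1_nat[OF pr] in auto)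
next
  case (insert c C I x)
  have prp: "prime (int p)" using pr by simp
  show ?case
  proof (cases "\<forall>i\<in>I. M c dvd x i c")
    case True
    from insert.IH[of I x] insert.prems insert.hyps obtain w where
      w: "\<forall>d\<in>C. M d dvd (\<Sum>i\<in>I. w i * x i d)" "\<exists>i\<in>I. \<not> int p dvd w i" by auto
    have "M c dvd (\<Sum>i\<in>I. w i * x i c)" using True by (intro dvd_sum) auto
    with w show ?thesis by auto
  next
    case False
    define J where "J = {i\<in>I. \<not> M c dvd x i c}"
    have "J \<noteq> {}" using False J_def by auto
    then obtain i1 where i1: "i1 \<in> J" "\<And>i. i \<in> J \<Longrightarrow> multiplicity (int p) (x i1 c) \<le> multiplicity (int p) (x i c)"
      using ex_has_least_nat[of "\<lambda>i. i \<in> J" _ "\<lambda>i. multiplicity (int p) (x i c)"] by blast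
    define v where "v = multiplicity (int p) (x i1 c)"
    have x1nz: "x i1 c \<noteq> 0" using i1 J_def by auto
    have nu: "\<not> is_unit (int p)" using prp not_prime_unit by blast
    define u where "u = x i1 c div int p ^ v"
    have pv1: "int p ^ v dvd x i1 c" unfolding v_def by (rule multiplicity_dvd)
    have xu: "x i1 c = u * int p ^ v" using pv1 u_def by simp
    have pu: "\<not> int p dvd u" unfolding u_def v_def using x1nz nu by (rule multiplicity_decompose)
    have pvall: "int p ^ v dvd x i c" if "i \<in> I" for i
    proof (cases "i \<in> J")
      case True
      then have "x i c \<noteq> 0" using J_def by auto
      then show ?thesis using i1(2)[OF True] power_dvd_iff_le_multiplicity[OF _ nu] v_def by blast
    next
      case False
      then have md: "M c dvd x i c" using J_def that by auto
      have "M c = 0 \<or> (\<exists>N. M c = int p ^ N)" using insert.prems by auto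
      then show ?thesis
      proof
        assume "M c = 0" then show ?thesis using md by simp
      next
        assume "\<exists>N. M c = int p ^ N"
        then obtain N where N: "M c = int p ^ N" by auto
        have "\<not> int p ^ N dvd x i1 c" using i1 J_def N by auto
        then have "v < N" using pv1 by (metis le_imp_power_dvd dvd_trans not_less)
        then have "int p ^ v dvd M c" using N by (simp add: le_imp_power_dvd)
        then show ?thesis using md by (rule dvd_trans)
      qed
    qed
    define a where "a i = x i c div int p ^ v" for i
    have xa: "x i c = a i * int p ^ v" if "i \<in> I" for i using pvall[OF that] a_def by simp
    define x' where "x' i d = u * x i d - a i * x i1 d" for i d
    define I' where "I' = I - {i1}"
    have i1I: "i1 \<in> I" using i1 J_def by auto
    have cI': "card I' = card I - 1" using I'_def i1I insert.prems by simp
    have "card C < card I'" using cI' insert.prems insert.hyps by simp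
    then obtain w' where w': "\<forall>d\<in>C. M d dvd (\<Sum>i\<in>I'. w' i * x' i d)" "\<exists>i\<in>I'. \<not> int p dvd w' i"
      using insert.IH[of I' x'] insert.prems I'_def by auto
    define w where "w i = (if i = i1 then - (\<Sum>j\<in>I'. w' j * a j) else u * w' i)" for i
    have key: "(\<Sum>i\<in>I. w i * x i d) = (\<Sum>i\<in>I'. w' i * x' i d)" for d
    proof -
      have "(\<Sum>i\<in>I. w i * x i d) = w i1 * x i1 d + (\<Sum>i\<in>I'. w i * x i d)"
        using i1I insert.prems I'_def by (simp add: sum.remove)
      also have "(\<Sum>i\<in>I'. w i * x i d) = (\<Sum>i\<in>I'. u * w' i * x i d)"
        by (rule sum.cong) (auto simp: w_def I'_def)
      also have "w i1 * x i1 d = - (\<Sum>j\<in>I'. w' j * a j * x i1 d)"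
        by (simp add: w_def sum_distrib_right)
      finally show ?thesis
        by (simp add: x'_def sum_subtractf right_diff_distrib algebra_simps)
    qed
    have x'c: "x' i c = 0" if "i \<in> I'" for i
      using that xa[of i] xu unfolding x'_def I'_def by (auto simp: algebra_simps)
    have "\<forall>d\<in>insert c C. M d dvd (\<Sum>i\<in>I. w i * x i d)"
      using w'(1) x'c by (auto simp: key)
    moreover obtain j where j: "j \<in> I'" "\<not> int p dvd w' j" using w'(2) by auto
    then have "\<not> int p dvd w j" using pu prp by (auto simp: w_def I'_def prime_dvd_mult_iff)
    then have "\<exists>i\<in>I. \<not> int p dvd w i" using j I'_def by auto
    ultimately show ?thesis by blast
  qed
qed

definition zeroG :: "('a \<Rightarrow> rat) \<times> ('b \<Rightarrow> complex)" where
  "zeroG = ((\<lambda>_. 0), (\<lambda>_. 1))"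

definition smulG :: "int \<Rightarrow> ('a \<Rightarrow> rat) \<times> ('b \<Rightarrow> complex) \<Rightarrow> ('a \<Rightarrow> rat) \<times> ('b \<Rightarrow> complex)" where
  "smulG n g = ((\<lambda>i. of_int n * fst g i), (\<lambda>j. snd g j powi n))"

definition gsumG :: "'i set \<Rightarrow> ('i \<Rightarrow> ('a \<Rightarrow> rat) \<times> ('b \<Rightarrow> complex)) \<Rightarrow> ('a \<Rightarrow> rat) \<times> ('b \<Rightarrow> complex)" where
  "gsumG S f = ((\<lambda>i. \<Sum>s\<in>S. fst (f s) i), (\<lambda>j. \<Prod>s\<in>S. snd (f s) j))"

lemma prufer_nz: "prime p \<Longrightarrow> z \<in> prufer p \<Longrightarrow> z \<noteq> 0"
proof
  assume pr: "prime p" and z: "z \<in> prufer p" and z0: "z = 0"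
  obtain m where m: "m \<ge> 1" "z ^ (p ^ m) = 1" using z unfolding prufer_def by blast
  have "p ^ m > 0" using prime_gt_0_nat[OF pr] by simp
  then have "z ^ (p ^ m) = 0" using z0 by (simp add: zero_power)
  then show False using m by simp
qed

lemma prufer_one: "1 \<in> prufer p"
  unfolding prufer_def by auto

lemma prufer_mult: assumes "z \<in> prufer p" "w \<in> prufer p" shows "z * w \<in> prufer p"
proof -
  obtain m1 m2 where m: "m1 \<ge> 1" "z ^ (p ^ m1) = 1" "m2 \<ge> 1" "w ^ (p ^ m2) = 1"
    using assms unfolding prufer_def by auto
  have e1: "p ^ (m1 + m2) = p ^ m1 * p ^ m2" by (simp add: power_add)
  have e2: "p ^ (m1 + m2) = p ^ m2 * p ^ m1" by (simp add: power_add)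
  have "z ^ (p ^ (m1 + m2)) = 1" unfolding e1 power_mult m(2) by simp
  moreover have "w ^ (p ^ (m1 + m2)) = 1" unfolding e2 power_mult m(4) by simp
  ultimately have "(z * w) ^ (p ^ (m1 + m2)) = 1" by (simp add: power_mult_distrib)
  then show ?thesis using m unfolding prufer_def by (intro CollectI exI[of _ "m1+m2"]) auto
qed

lemma prufer_powi: assumes "z \<in> prufer p" shows "z powi n \<in> prufer p"
proof -
  obtain m where m: "m \<ge> 1" "z ^ (p ^ m) = 1" using assms unfolding prufer_def by auto
  have "(z powi n) ^ (p ^ m) = (z ^ (p ^ m)) powi n"
    by (simp only: power_int_power' power_int_power mult.commute)
  then have "(z powi n) ^ (p ^ m) = 1" using m(2) by simp
  then show ?thesis using m(1) unfolding prufer_def by blast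
qed

lemma Gamma_snd: "x \<in> Gamma p B1 B2 \<Longrightarrow> snd x j \<in> prufer p"
  by (cases x) (simp add: Gamma_def)

lemma zeroG_in: "zeroG \<in> Gamma p B1 B2"
  unfolding zeroG_def Gamma_def by (auto simp: prufer_one)

lemma op_in: assumes "x \<in> Gamma p B1 B2" "y \<in> Gamma p B1 B2"
  shows "gamma_op x y \<in> Gamma p B1 B2"
proof -
  obtain f g f' g' where xy: "x = (f, g)" "y = (f', g')" by fastforce
  have A: "{i. f i + f' i \<noteq> 0} \<subseteq> {i. f i \<noteq> 0} \<union> {i. f' i \<noteq> 0}" by auto
  have B: "{j. g j * g' j \<noteq> 1} \<subseteq> {j. g j \<noteq> 1} \<union> {j. g' j \<noteq> 1}" by auto
  have h: "finite {i. f i \<noteq> 0}" "{i. f i \<noteq> 0} \<subseteq> B1" "finite {j. g j \<noteq> 1}" "{j. g j \<noteq> 1} \<subseteq> B2"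
     "\<forall>j. g j \<in> prufer p"
    using assms(1) unfolding xy Gamma_def by auto
  have h': "finite {i. f' i \<noteq> 0}" "{i. f' i \<noteq> 0} \<subseteq> B1" "finite {j. g' j \<noteq> 1}" "{j. g' j \<noteq> 1} \<subseteq> B2"
     "\<forall>j. g' j \<in> prufer p"
    using assms(2) unfolding xy Gamma_def by auto
  have "finite {i. f i + f' i \<noteq> 0}" using A h h' by (meson finite_Un finite_subset)
  moreover have "{i. f i + f' i \<noteq> 0} \<subseteq> B1" using A h h' by blast
  moreover have "finite {j. g j * g' j \<noteq> 1}" using B h h' by (meson finite_Un finite_subset)
  moreover have "{j. g j * g' j \<noteq> 1} \<subseteq> B2" using B h h' by blast
  moreover have "\<forall>j. g j * g' j \<in> prufer p" using h h' prufer_mult by blast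
  ultimately show ?thesis unfolding xy Gamma_def gamma_op_def by simp
qed

lemma smul_in: assumes "x \<in> Gamma p B1 B2" shows "smulG n x \<in> Gamma p B1 B2"
proof -
  obtain f g where xy: "x = (f, g)" by fastforce
  have A: "{i. of_int n * f i \<noteq> 0} \<subseteq> {i. f i \<noteq> 0}" by auto
  have B: "{j. g j powi n \<noteq> 1} \<subseteq> {j. g j \<noteq> 1}" by auto
  have h: "finite {i. f i \<noteq> 0}" "{i. f i \<noteq> 0} \<subseteq> B1" "finite {j. g j \<noteq> 1}" "{j. g j \<noteq> 1} \<subseteq> B2"
     "\<forall>j. g j \<in> prufer p"
    using assms(1) unfolding xy Gamma_def by auto
  have "finite {i. of_int n * f i \<noteq> 0}" using A h by (meson finite_subset)
  moreover have "{i. of_int n * f i \<noteq> 0} \<subseteq> B1" using A h by blast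
  moreover have "finite {j. g j powi n \<noteq> 1}" using B h by (meson finite_subset)
  moreover have "{j. g j powi n \<noteq> 1} \<subseteq> B2" using B h by blast
  moreover have "\<forall>j. g j powi n \<in> prufer p" using h prufer_powi by blast
  ultimately show ?thesis unfolding xy Gamma_def smulG_def by simp
qed

lemma gsum_insert: "finite S \<Longrightarrow> s \<notin> S \<Longrightarrow> gsumG (insert s S) f = gamma_op (f s) (gsumG S f)"
  unfolding gsumG_def gamma_op_def by simp

lemma gsum_empty: "gsumG {} f = zeroG"
  unfolding gsumG_def zeroG_def by simp

lemma gsum_in: "finite S \<Longrightarrow> f ` S \<subseteq> Gamma p B1 B2 \<Longrightarrow> gsumG S f \<in> Gamma p B1 B2"
  by (induction S rule: finite_induct) (auto simp: gsum_insert gsum_empty zeroG_in op_in)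

context
  fixes p :: nat and B1 :: "'a set" and B2 :: "'b set" and X
  assumes pr: "prime p" and ch: "is_character p B1 B2 X"
begin

lemma chi_nz: "x \<in> Gamma p B1 B2 \<Longrightarrow> X x \<noteq> 0"
proof -
  assume "x \<in> Gamma p B1 B2"
  then have "cmod (X x) = 1" using ch unfolding is_character_def by blast
  then show ?thesis by auto
qed

lemma chi_op: "x \<in> Gamma p B1 B2 \<Longrightarrow> y \<in> Gamma p B1 B2 \<Longrightarrow> X (gamma_op x y) = X x * X y"
  using ch unfolding is_character_def by blast

lemma chi_zero: "X zeroG = 1"
proof -
  have "gamma_op zeroG zeroG = (zeroG :: ('a \<Rightarrow> rat) \<times> ('b \<Rightarrow> complex))"
    unfolding gamma_op_def zeroG_def by simp
  then have "X zeroG = X zeroG * X zeroG" using chi_op[OF zeroG_in zeroG_in] by metis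
  then show ?thesis using chi_nz[OF zeroG_in] by simp
qed

lemma chi_smul: assumes x: "x \<in> Gamma p B1 B2" shows "X (smulG n x) = X x powi n"
proof (induction n rule: int_induct[where k=0])
  case base
  have "smulG 0 x = zeroG" unfolding smulG_def zeroG_def by simp
  then show ?case using chi_zero by simp
next
  case (step1 i)
  have nz: "snd x j \<noteq> 0" for j using prufer_nz[OF pr Gamma_snd[OF x]] .
  have "smulG (i+1) x = gamma_op (smulG i x) x"
    unfolding smulG_def gamma_op_def using nz by (simp add: fun_eq_iff distrib_right power_int_add_1)
  then have "X (smulG (i+1) x) = X (smulG i x) * X x" using chi_op[OF smul_in[OF x] x] by simp
  then show ?case using step1 chi_nz[OF x] by (simp add: power_int_add_1)
next
  case (step2 i)
  have nz: "snd x j \<noteq> 0" for j using prufer_nz[OF pr Gamma_snd[OF x]] .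
  have "smulG i x = gamma_op (smulG (i - 1) x) x"
    unfolding smulG_def gamma_op_def using nz by (simp add: fun_eq_iff left_diff_distrib power_int_minus_mult)
  then have "X (smulG i x) = X (smulG (i - 1) x) * X x" using chi_op[OF smul_in[OF x] x] by simp
  then have "X (smulG (i - 1) x) = X x powi i / X x" using step2 chi_nz[OF x] by (simp add: nonzero_eq_divide_eq)
  then show ?case using chi_nz[OF x] by (simp add: power_int_diff)
qed

lemma chi_gsum: "finite S \<Longrightarrow> f ` S \<subseteq> Gamma p B1 B2 \<Longrightarrow> X (gsumG S f) = (\<Prod>s\<in>S. X (f s))"
proof (induction S rule: finite_induct)
  case empty then show ?case by (simp add: gsum_empty chi_zero)
next
  case (insert s S)
  then show ?case by (simp add: gsum_insert chi_op gsum_in)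
qed

end


lemma Gamma_fst0: "x \<in> Gamma p B1 B2 \<Longrightarrow> b \<notin> B1 \<Longrightarrow> fst x b = 0"
  by (cases x) (auto simp: Gamma_def)

lemma Gamma_snd1: "x \<in> Gamma p B1 B2 \<Longrightarrow> b \<notin> B2 \<Longrightarrow> snd x b = 1"
  by (cases x) (auto simp: Gamma_def)

lemma omega_pow:
  assumes p0: "p > 0" and e: "exp (2 * of_real pi * \<i> / of_nat p) powi k = 1"
  shows "int p dvd k"
proof -
  have "exp (of_int k * (2 * of_real pi * \<i> / of_nat p)) = 1" using e by (simp add: exp_power_int)
  then obtain n :: int where n: "Im (of_int k * (2 * of_real pi * \<i> / of_nat p)) = of_int (2 * n) * pi"
    unfolding exp_eq_1 by blast
  have "Im (of_int k * (2 * of_real pi * \<i> / of_nat p)) = of_int k * 2 * pi / of_nat p"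
    using p0 by (simp add: Im_divide field_simps power2_eq_square)
  with n have "of_int k * 2 * pi / of_nat p = of_int (2 * n) * pi" by simp
  then have "of_int k = (of_int (n * int p) :: real)" using p0 pi_gt_zero
    by (simp add: field_simps)
  then have "k = n * int p" by linarith
  then show ?thesis by simp
qed

lemma exp_int_one: "exp (2 * of_real pi * \<i> * of_int t) = 1"
  unfolding exp_eq_1 by (intro conjI exI[of _ t]) auto

lemma finite_bound:
  fixes p :: nat and B1 :: "'a set" and B2 :: "'b set"
    and E F :: "(('a \<Rightarrow> rat) \<times> ('b \<Rightarrow> complex)) set"
  assumes pr: "prime p" and fB1: "finite B1" and fB2: "finite B2"
    and EG: "E \<subseteq> Gamma p B1 B2" and npr: "N_PR p p B1 B2 E" and FE: "F \<subseteq> E" and fF: "finite F"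
  shows "card F \<le> card B1 + card B2"
proof (rule ccontr)
  assume "\<not> ?thesis"
  then have cF: "card (B1 <+> B2) < card F" using fB1 fB2 by (simp add: card_Plus)
  have FG: "F \<subseteq> Gamma p B1 B2" using FE EG by auto
  have p0: "p > 0" using pr prime_gt_0_nat by blast
  define P where "P = F \<times> B1"
  have fP: "finite P" using fF fB1 P_def by simp
  define den where "den q = snd (quotient_of (fst (fst q) (snd q)))" for q :: "(('a \<Rightarrow> rat) \<times> ('b \<Rightarrow> complex)) \<times> 'a"
  define D where "D = (\<Prod>q\<in>P. den q)"
  have Dpos: "D > 0" unfolding D_def den_def by (rule prod_pos) (simp add: quotient_of_denom_pos')
  have Dint: "\<exists>k::int. of_int k = of_int D * fst g b" if gb: "g \<in> F" "b \<in> B1" for g b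
  proof -
    obtain n d where qd: "quotient_of (fst g b) = (n, d)" by fastforce
    have r: "fst g b = of_int n / of_int d" using quotient_of_div[OF qd] .
    have d0: "d > 0" using quotient_of_denom_pos[OF qd] .
    have qP: "(g, b) \<in> P" using gb P_def by simp
    have "D = den (g, b) * (\<Prod>q\<in>P - {(g, b)}. den q)" unfolding D_def using fP qP by (simp add: prod.remove)
    also have "den (g, b) = d" unfolding den_def using qd by simp
    finally have "D = d * (\<Prod>q\<in>P - {(g, b)}. den q)" .
    then have "of_int D * fst g b = of_int ((\<Prod>q\<in>P - {(g, b)}. den q) * n)"
      using d0 r by (simp add: field_simps)
    then show ?thesis by metis
  qed
  define xq where "xq g b = (SOME k::int. of_int k = of_int D * fst g b)" for g :: "('a \<Rightarrow> rat) \<times> ('b \<Rightarrow> complex)" and b :: 'a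
  have xq: "of_int (xq g b) = of_int D * fst g b" if "g \<in> F" "b \<in> B1" for g b
    unfolding xq_def using someI_ex[OF Dint[OF that]] .
  define Q where "Q = F \<times> B2"
  have fQ: "finite Q" using fF fB2 Q_def by simp
  define ordp where "ordp q = (SOME m. m \<ge> 1 \<and> (snd (fst q) (snd q)) ^ (p ^ m) = 1)" for q :: "(('a \<Rightarrow> rat) \<times> ('b \<Rightarrow> complex)) \<times> 'b"
  define N where "N = (\<Sum>q\<in>Q. ordp q)"
  have zN: "(snd g b) ^ (p ^ N) = 1" if gb: "g \<in> F" "b \<in> B2" for g b
  proof -
    have "g \<in> Gamma p B1 B2" using gb FG by blast
    then have "snd g b \<in> prufer p" by (rule Gamma_snd)
    then have ex: "\<exists>m. m \<ge> 1 \<and> (snd g b) ^ (p ^ m) = 1" unfolding prufer_def by blast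
    have o: "(snd g b) ^ (p ^ ordp (g, b)) = 1" unfolding ordp_def using someI_ex[OF ex] by simp
    have "ordp (g, b) \<le> N" unfolding N_def using fQ gb Q_def by (intro member_le_sum) auto
    then have "p ^ N = p ^ ordp (g, b) * p ^ (N - ordp (g, b))" by (simp flip: power_add)
    then show ?thesis using o by (simp add: power_mult)
  qed
  have exz: "\<exists>j::nat. snd g b = exp (2 * of_real pi * \<i> * of_nat j / of_nat (p ^ N))" if "g \<in> F" "b \<in> B2" for g b
  proof -
    have "1 \<le> p ^ N" using p0 by simp
    then have "snd g b \<in> {exp (2 * of_real pi * \<i> * of_nat j / of_nat (p ^ N)) | j. j < p ^ N}"
      using complex_roots_unity[of "p ^ N"] zN[OF that] by blast
    then show ?thesis by blast
  qed
  define xz where "xz g b = (SOME j::nat. snd g b = exp (2 * of_real pi * \<i> * of_nat j / of_nat (p ^ N)))" for g :: "('a \<Rightarrow> rat) \<times> ('b \<Rightarrow> complex)" and b :: 'b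
  have xz: "snd g b = exp (2 * of_real pi * \<i> * of_nat (xz g b) / of_nat (p ^ N))" if "g \<in> F" "b \<in> B2" for g b
    unfolding xz_def using someI_ex[OF exz[OF that]] .
  define x where "x g c = (case c of Inl b \<Rightarrow> xq g b | Inr b \<Rightarrow> int (xz g b))" for g :: "('a \<Rightarrow> rat) \<times> ('b \<Rightarrow> complex)" and c
  define M where "M c = (case c of Inl (b::'a) \<Rightarrow> 0 | Inr (b::'b) \<Rightarrow> int p ^ N)" for c
  have "\<forall>c\<in>B1 <+> B2. M c = 0 \<or> (\<exists>N. M c = int p ^ N)" unfolding M_def by (auto split: sum.split)
  then obtain w where w: "\<forall>c\<in>B1 <+> B2. M c dvd (\<Sum>g\<in>F. w g * x g c)" and "\<exists>g\<in>F. \<not> int p dvd w g"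
    using relation_exists[OF pr, of "B1 <+> B2" F M x] fB1 fB2 fF cF by auto
  then obtain g0 where g0: "g0 \<in> F" "\<not> int p dvd w g0" by auto
  define \<omega> where "\<omega> = exp (2 * of_real pi * \<i> / of_nat p)"
  have om: "\<omega> ^ p = 1" unfolding \<omega>_def using complex_root_unity[of p 1] p0 by simp
  define \<phi> where "\<phi> g = (if g = g0 then \<omega> else 1)" for g
  have "\<forall>g\<in>E. \<phi> g \<in> roots_unity p" unfolding \<phi>_def roots_unity_def using om by auto
  then obtain X where X: "is_character p B1 B2 X" "\<forall>g\<in>E. X g = \<phi> g"
    using npr unfolding N_PR_def by blast
  define \<sigma> where "\<sigma> = gsumG F (\<lambda>g. smulG (w g) g)"
  have fstz: "(\<Sum>g\<in>F. of_int (w g) * fst g b) = 0" for b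
  proof (cases "b \<in> B1")
    case True
    have "M (Inl b) dvd (\<Sum>g\<in>F. w g * x g (Inl b))" using w True by auto
    then have s0: "(\<Sum>g\<in>F. w g * xq g b) = 0" unfolding M_def x_def by simp
    have "of_int D * (\<Sum>g\<in>F. of_int (w g) * fst g b) = (\<Sum>g\<in>F. of_int (w g) * (of_int D * fst g b))"
      by (simp add: sum_distrib_left algebra_simps)
    also have "\<dots> = (\<Sum>g\<in>F. of_int (w g) * of_int (xq g b))"
      using xq True by (intro sum.cong) auto
    also have "\<dots> = of_int (\<Sum>g\<in>F. w g * xq g b)" by simp
    finally have "of_int D * (\<Sum>g\<in>F. of_int (w g) * fst g b) = (0::rat)" using s0 by simp
    then show ?thesis using Dpos by simp
  next
    case False
    then show ?thesis using FG Gamma_fst0 by (intro sum.neutral) fastforce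
  qed
  have sndz: "(\<Prod>g\<in>F. snd g b powi w g) = 1" for b
  proof (cases "b \<in> B2")
    case True
    have "M (Inr b) dvd (\<Sum>g\<in>F. w g * x g (Inr b))" using w True by auto
    then obtain t where t: "(\<Sum>g\<in>F. w g * int (xz g b)) = int p ^ N * t" unfolding M_def x_def by auto
    define c where "c = 2 * of_real pi * \<i> / of_nat (p ^ N)"
    have "(\<Prod>g\<in>F. snd g b powi w g) = (\<Prod>g\<in>F. exp (of_int (w g) * (c * of_nat (xz g b))))"
      using xz True by (intro prod.cong) (auto simp: exp_power_int c_def)
    also have "\<dots> = exp (\<Sum>g\<in>F. of_int (w g) * (c * of_nat (xz g b)))" using fF by (simp add: exp_sum)
    also have "(\<Sum>g\<in>F. of_int (w g) * (c * of_nat (xz g b))) = c * of_int (\<Sum>g\<in>F. w g * int (xz g b))"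
      by (simp add: sum_distrib_left algebra_simps)
    also have "\<dots> = 2 * of_real pi * \<i> * of_int t" using t p0 unfolding c_def by simp
    finally show ?thesis using exp_int_one by simp
  next
    case False
    then show ?thesis using FG Gamma_snd1 by (intro prod.neutral) fastforce
  qed
  have "\<sigma> = zeroG" unfolding \<sigma>_def gsumG_def zeroG_def smulG_def using fstz sndz by auto
  then have "X \<sigma> = 1" using chi_zero[OF pr X(1)] by simp
  moreover have "X \<sigma> = (\<Prod>g\<in>F. X (smulG (w g) g))"
    unfolding \<sigma>_def using fF FG by (intro chi_gsum[OF pr X(1)]) (auto intro!: smul_in)
  moreover have "\<dots> = (\<Prod>g\<in>F. \<phi> g powi w g)"
  proof (rule prod.cong[OF refl])
    fix g assume g: "g \<in> F"
    then have gG: "g \<in> Gamma p B1 B2" using FG by blast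
    have "X g = \<phi> g" using X(2) FE g by blast
    then show "X (smulG (w g) g) = \<phi> g powi w g" using chi_smul[OF pr X(1) gG] by simp
  qed
  moreover have "\<dots> = \<phi> g0 powi w g0 * (\<Prod>g\<in>F - {g0}. \<phi> g powi w g)"
    using fF g0 by (simp add: prod.remove)
  moreover have "(\<Prod>g\<in>F - {g0}. \<phi> g powi w g) = 1" unfolding \<phi>_def by (intro prod.neutral) auto
  ultimately have "\<omega> powi w g0 = 1" unfolding \<phi>_def by simp
  then have "int p dvd w g0" using omega_pow[OF p0] unfolding \<omega>_def by blast
  then show False using g0 by simp
qed


lemma countable_prufer: assumes "p > 0" shows "countable (prufer p)"
proof -
  have "prufer p \<subseteq> (\<Union>m. {z::complex. z ^ (p ^ m) = 1})" unfolding prufer_def by blast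
  moreover have "finite {z::complex. z ^ (p ^ m) = 1}" for m
    using assms by (intro finite_roots_unity) simp
  then have "countable (\<Union>m. {z::complex. z ^ (p ^ m) = 1})"
    by (intro countable_UN) (simp_all add: countable_finite)
  ultimately show ?thesis by (rule countable_subset)
qed

lemma Gamma_lepoll:
  fixes p :: nat and B1 :: "'a set" and B2 :: "'b set"
  assumes p0: "p > 0" and inf: "infinite (B1 <+> B2)"
  shows "Gamma p B1 B2 \<lesssim> B1 <+> B2"
proof -
  define A where "A = B1 <+> B2"
  define h where "h = to_nat_on (prufer p)"
  have hinj: "inj_on h (prufer p)" unfolding h_def using countable_prufer[OF p0] by blast
  define enc where "enc g = (\<lambda>b. (Inl b, to_nat (fst g b))) ` {b. fst g b \<noteq> 0}
      \<union> (\<lambda>b. (Inr b, h (snd g b))) ` {b. snd g b \<noteq> 1}" for g :: "('a \<Rightarrow> rat) \<times> ('b \<Rightarrow> complex)"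
  have encl: "(Inl b, n) \<in> enc g \<longleftrightarrow> fst g b \<noteq> 0 \<and> n = to_nat (fst g b)" for g b n
    unfolding enc_def by auto
  have encr: "(Inr b, n) \<in> enc g \<longleftrightarrow> snd g b \<noteq> 1 \<and> n = h (snd g b)" for g b n
    unfolding enc_def by auto
  have l: "fst a' b = fst a b" if "fst a b \<noteq> 0" "enc a = enc a'" for a a' b
  proof -
    have "(Inl b, to_nat (fst a b)) \<in> enc a" using that(1) by (simp add: encl)
    then have "(Inl b, to_nat (fst a b)) \<in> enc a'" using that(2) by simp
    then have "to_nat (fst a b) = to_nat (fst a' b)" by (simp add: encl)
    then show ?thesis by (simp add: inj_eq)
  qed
  have r: "h (snd a' b) = h (snd a b)" "snd a' b \<noteq> 1" if "snd a b \<noteq> 1" "enc a = enc a'" for a a' b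
  proof -
    have "(Inr b, h (snd a b)) \<in> enc a" using that(1) by (simp add: encr)
    then have "(Inr b, h (snd a b)) \<in> enc a'" using that(2) by simp
    then show "h (snd a' b) = h (snd a b)" "snd a' b \<noteq> 1" by (simp_all add: encr)
  qed
  have "inj_on enc (Gamma p B1 B2)"
  proof (rule inj_onI)
    fix g g' assume g: "g \<in> Gamma p B1 B2" and g': "g' \<in> Gamma p B1 B2" and e: "enc g = enc g'"
    have "fst g b = fst g' b" for b
    proof (cases "fst g b = 0")
      case True
      show ?thesis
      proof (cases "fst g' b = 0")
        case True then show ?thesis using \<open>fst g b = 0\<close> by simp
      next
        case False then show ?thesis using l[of g' b g] e by simp
      qed
    next
      case False then show ?thesis using l[of g b g'] e by simp
    qed
    moreover have "snd g b = snd g' b" for b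
    proof -
      have "h (snd g b) = h (snd g' b)"
      proof (cases "snd g b = 1")
        case True
        show ?thesis
        proof (cases "snd g' b = 1")
          case True then show ?thesis using \<open>snd g b = 1\<close> by simp
        next
          case False then show ?thesis using r[of g' b g] e by simp
        qed
      next
        case False then show ?thesis using r[of g b g'] e by simp
      qed
      then show ?thesis using hinj Gamma_snd[OF g] Gamma_snd[OF g'] by (meson inj_onD)
    qed
    ultimately show "g = g'" by (simp add: prod_eq_iff fun_eq_iff)
  qed
  moreover have "enc \<in> Gamma p B1 B2 \<rightarrow> Fpow (A \<times> (UNIV :: nat set))"
  proof
    fix g assume g: "g \<in> Gamma p B1 B2"
    then have h1: "finite {b. fst g b \<noteq> 0}" "{b. fst g b \<noteq> 0} \<subseteq> B1"
      "finite {b. snd g b \<noteq> 1}" "{b. snd g b \<noteq> 1} \<subseteq> B2"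
      by (cases g; simp add: Gamma_def)+
    have "finite (enc g)" unfolding enc_def using h1 by simp
    moreover have "enc g \<subseteq> A \<times> UNIV" unfolding enc_def A_def using h1 by auto
    ultimately show "enc g \<in> Fpow (A \<times> UNIV)" unfolding Fpow_def by blast
  qed
  ultimately have "Gamma p B1 B2 \<lesssim> Fpow (A \<times> (UNIV :: nat set))" unfolding lepoll_def' by blast
  also have "Fpow (A \<times> (UNIV :: nat set)) \<approx> A \<times> (UNIV :: nat set)"
    using inf A_def finite_cartesian_productD1[of A "UNIV::nat set"] by (intro eqpoll_Fpow) auto
  also have "A \<times> (UNIV :: nat set) \<approx> A"
  proof -
    have "|UNIV::nat set| \<le>o |A|" using inf A_def infinite_iff_card_of_nat by blast
    then have "|A \<times> (UNIV :: nat set)| =o |A|" using card_of_Times_infinite[of A "UNIV :: nat set"] inf A_def by auto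
    then show ?thesis by (simp add: eqpoll_iff_card_of_ordIso)
  qed
  finally show ?thesis unfolding A_def .
qed

theorem proposition3p6:
  fixes p :: nat and B1 :: "'a set" and B2 :: "'b set"
    and E :: "(('a \<Rightarrow> rat) \<times> ('b \<Rightarrow> complex)) set"
  assumes "prime p"
    and "E \<subseteq> Gamma p B1 B2"
    and "N_PR p p B1 B2 E"
  shows "E \<lesssim> B1 <+> B2"
proof (cases "finite B1 \<and> finite B2")
  case True
  have fE: "finite E"
  proof (rule ccontr)
    assume "infinite E"
    then obtain F where F: "finite F" "card F = card B1 + card B2 + 1" "F \<subseteq> E"
      using infinite_arbitrarily_large by blast
    then have "card F \<le> card B1 + card B2" using finite_bound[OF assms(1) _ _ assms(2,3)] True by blast
    then show False using F by simp
  qed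
  then have "card E \<le> card B1 + card B2" using finite_bound[OF assms(1) _ _ assms(2,3)] True by blast
  then show ?thesis using fE True by (simp add: lepoll_iff_card_le card_Plus)
next
  case False
  then have inf: "infinite (B1 <+> B2)" by simp
  have "E \<lesssim> Gamma p B1 B2" using assms(2) by (rule subset_imp_lepoll)
  also have "Gamma p B1 B2 \<lesssim> B1 <+> B2"
    using Gamma_lepoll[OF _ inf] prime_gt_0_nat[OF assms(1)] by blast
  finally show ?thesis .
qed

end
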